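(* Let $\sigma_1,\sigma_2,\sigma_3>0$ and $\rho_{12},\rho_\varnothing\in[-1,1]$ with $\sigma_1^2+\sigma_2^2+2\rho_{12}\sigma_1\sigma_2>0$. Consider all multivariate normal random vectors $(X_1,X_2,X_3)$ with $X_i\sim\mathcal{N}(0,\sigma_i^2)$, $i=1,2,3$, such that the copula of $(X_1,X_2)$ is the bivariate normal copula with correlation $\rho_{12}$ and the copula of $(X_1+X_2,X_3)$ is the bivariate normal copula with correlation $\rho_\varnothing$ (equivalently $\operatorname{corr}(X_1,X_2)=\rho_{12}$ and $\operatorname{corr}(X_1+X_2,X_3)=\rho_\varnothing$). Then the set of values taken by $\operatorname{corr}(X_1,X_3)$ over all such vectors is exactly the interval $[\rho_{13}^{\min},\rho_{13}^{\max}]$, where \[ \rho_{13}^{\min/\max}=\frac{\rho_\varnothing\rho_{12}\sigma_2+\rho_\varnothing\sigma_1}{\sqrt{\sigma_1^2+\sigma_2^2+2\rho_{12}\sigma_1\sigma_2}}\mp\frac{\sqrt{\sigma_2^2(1-\rho_{12}^2)(1-\rho_\varnothing^2)}}{\sqrt{\sigma_1^2+\sigma_2^2+2\rho_{12}\sigma_1\sigma_2}}. \]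
   Context: This describes the multivariate normal mildly tree dependent distributions of the three-dimensional Gaussian aggregation tree in which $X_1$ and $X_2$ are first aggregated via the normal copula with correlation $\rho_{12}$ and then $X_1+X_2$ is aggregated with $X_3$ via the normal copula with correlation $\rho_\varnothing$. *)

theory Defs
  imports "HOL-Probability.Probability"
begin

text \<open>A (possibly degenerate) centred multivariate normal random vector (X1,X2,X3) on the
probability space M: it is a linear image X = A Z of a vector Z = (Z0,Z1,Z2) of independent
standard normal random variables.\<close>
definition centered_mvn3 ::
  "'a measure \<Rightarrow> ('a \<Rightarrow> real) \<Rightarrow> ('a \<Rightarrow> real) \<Rightarrow> ('a \<Rightarrow> real) \<Rightarrow> bool" where
  "centered_mvn3 M X1 X2 X3 \<longleftrightarrow>
     prob_space M \<and>
     (\<exists>(Z :: nat \<Rightarrow> 'a \<Rightarrow> real) (A :: nat \<Rightarrow> nat \<Rightarrow> real).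
        prob_space.indep_vars M (\<lambda>_. borel) Z {0, 1, 2} \<and>
        (\<forall>j \<in> {0, 1, 2}. distributed M lborel (Z j) (\<lambda>x. ennreal (std_normal_density x))) \<and>
        (\<forall>x \<in> space M.
           X1 x = A 1 0 * Z 0 x + A 1 1 * Z 1 x + A 1 2 * Z 2 x \<and>
           X2 x = A 2 0 * Z 0 x + A 2 1 * Z 1 x + A 2 2 * Z 2 x \<and>
           X3 x = A 3 0 * Z 0 x + A 3 1 * Z 1 x + A 3 2 * Z 2 x))"

definition covariance :: "'a measure \<Rightarrow> ('a \<Rightarrow> real) \<Rightarrow> ('a \<Rightarrow> real) \<Rightarrow> real" where
  "covariance M X Y =
     (\<integral>x. (X x - (\<integral>y. X y \<partial>M)) * (Y x - (\<integral>y. Y y \<partial>M)) \<partial>M)"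

definition correlation :: "'a measure \<Rightarrow> ('a \<Rightarrow> real) \<Rightarrow> ('a \<Rightarrow> real) \<Rightarrow> real" where
  "correlation M X Y = covariance M X Y / sqrt (covariance M X X * covariance M Y Y)"

end

theory Submission
  imports Defs
begin


lemma Zmom:
  assumes P: "prob_space M" and ind: "prob_space.indep_vars M (\<lambda>_. borel) Z {0,1,2::nat}"
  and D: "\<forall>j\<in>{0,1,2}. distributed M lborel (Z j) (\<lambda>x. ennreal (std_normal_density x))"
  and j: "j < 3" and k: "k < 3"
  shows "integrable M (Z j)" "integral\<^sup>L M (Z j) = 0"
    "integrable M (\<lambda>x. Z j x * Z k x)"
    "(\<integral>x. Z j x * Z k x \<partial>M) = (if j = k then 1 else 0)"
proof -
  interpret prob_space M by fact
  have Dj: "distributed M lborel (Z j) (\<lambda>x. ennreal (std_normal_density x))"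
    if "j < 3" for j using D that by (auto simp: eval_nat_numeral less_Suc_eq)
  have ij: "integrable M (Z j)" if "j<3" for j
    using distributed_integrable[OF Dj[OF that], of "\<lambda>x. x"] integrable_std_normal_moment[of 1]
    by simp
  show "integrable M (Z j)" using ij j .
  show "integral\<^sup>L M (Z j) = 0"
    using distributed_integral[OF Dj[OF j], of "\<lambda>x. x"] integral_std_normal_moment_odd[of 0]
    by simp
  have sq: "integrable M (\<lambda>x. Z j x * Z j x) \<and> (\<integral>x. Z j x * Z j x \<partial>M) = 1" if "j<3" for j
  proof
    show "integrable M (\<lambda>x. Z j x * Z j x)"
      using distributed_integrable[OF Dj[OF that], of "\<lambda>x. x^2"] integrable_std_normal_moment[of 2]
      by (simp add: power2_eq_square)
    show "(\<integral>x. Z j x * Z j x \<partial>M) = 1"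
      using distributed_integral[OF Dj[OF that], of "\<lambda>x. x^2"] integral_std_normal_moment_even[of 1]
      by (simp add: power2_eq_square)
  qed
  have off: "integrable M (\<lambda>x. Z j x * Z k x) \<and> (\<integral>x. Z j x * Z k x \<partial>M) = 0"
    if "j<3" "k<3" "j \<noteq> k" for j k
  proof -
    have I: "indep_vars (\<lambda>_. borel) Z {j,k}"
      using indep_vars_subset[OF ind] that by (auto simp: eval_nat_numeral less_Suc_eq)
    have "integrable M (\<lambda>x. \<Prod>i\<in>{j,k}. Z i x)"
      by (rule indep_vars_integrable[OF _ I]) (use ij that in auto)
    moreover have "(\<integral>x. (\<Prod>i\<in>{j,k}. Z i x) \<partial>M) = (\<Prod>i\<in>{j,k}. integral\<^sup>L M (Z i))"
      by (rule indep_vars_lebesgue_integral[OF _ I]) (use ij that in auto)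
    moreover have "integral\<^sup>L M (Z j) = 0"
      using distributed_integral[OF Dj[OF that(1)], of "\<lambda>x. x"] integral_std_normal_moment_odd[of 0]
      by simp
    ultimately show ?thesis using that by simp
  qed
  show "integrable M (\<lambda>x. Z j x * Z k x)" using sq off j k by (cases "j = k") auto
  show "(\<integral>x. Z j x * Z k x \<partial>M) = (if j = k then 1 else 0)" using sq off j k by (cases "j = k") auto
qed

lemma lincov:
  assumes P: "prob_space M" and ind: "prob_space.indep_vars M (\<lambda>_. borel) Z {0,1,2::nat}"
  and D: "\<forall>j\<in>{0,1,2}. distributed M lborel (Z j) (\<lambda>x. ennreal (std_normal_density x))"
  and X: "\<forall>x\<in>space M. X x = (\<Sum>j<3. a j * Z j x)"
  and Y: "\<forall>x\<in>space M. Y x = (\<Sum>j<3. b j * Z j x)"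
  shows "integral\<^sup>L M X = 0" "covariance M X Y = (\<Sum>j<3. a j * b j)"
proof -
  note m = Zmom[OF P ind D]
  have iX: "integral\<^sup>L M X = 0"
    if X: "\<forall>x\<in>space M. X x = (\<Sum>j<3. a j * Z j x)" for X a
  proof -
    have "integral\<^sup>L M X = (\<integral>x. (\<Sum>j<3. a j * Z j x) \<partial>M)"
      by (rule Bochner_Integration.integral_cong[OF refl]) (use X in auto)
    also have "\<dots> = (\<Sum>j<3. a j * integral\<^sup>L M (Z j))"
      by (subst Bochner_Integration.integral_sum) (auto simp: m(1))
    also have "\<dots> = 0" using m(2) by simp
    finally show ?thesis .
  qed
  show "integral\<^sup>L M X = 0" using iX[OF X] .
  have "covariance M X Y = (\<integral>x. X x * Y x \<partial>M)"
    unfolding covariance_def using iX[OF X] iX[OF Y] by simp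
  also have "\<dots> = (\<integral>x. (\<Sum>j<3. \<Sum>k<3. a j * b k * (Z j x * Z k x)) \<partial>M)"
    by (rule Bochner_Integration.integral_cong[OF refl]) (use X Y in \<open>auto simp: sum_product algebra_simps\<close>)
  also have "\<dots> = (\<Sum>j<3. \<Sum>k<3. a j * b k * (\<integral>x. Z j x * Z k x \<partial>M))"
    by (subst Bochner_Integration.integral_sum) (auto simp: m(3) Bochner_Integration.integral_sum)
  also have "\<dots> = (\<Sum>j<3. a j * b j)"
    by (simp add: m(4) eval_nat_numeral)
  finally show "covariance M X Y = (\<Sum>j<3. a j * b j)" .
qed

lemma linnormal:
  assumes P: "prob_space M" and ind: "prob_space.indep_vars M (\<lambda>_. borel) Z {0,1,2::nat}"
  and D: "\<forall>j\<in>{0,1,2}. distributed M lborel (Z j) (\<lambda>x. ennreal (std_normal_density x))"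
  and pos: "(\<Sum>j<3. (a j)\<^sup>2) > 0"
  shows "distributed M lborel (\<lambda>x. \<Sum>j<3. a j * Z j x)
           (\<lambda>x. ennreal (normal_density 0 (sqrt (\<Sum>j<3. (a j)\<^sup>2)) x))"
proof -
  interpret prob_space M by fact
  define I where "I = {j\<in>{..<3::nat}. a j \<noteq> 0}"
  have fin: "finite I" by (simp add: I_def)
  have ne: "I \<noteq> {}"
  proof
    assume "I = {}"
    then have "\<forall>j<3. a j = 0" by (auto simp: I_def)
    then show False using pos by simp
  qed
  have sub: "I \<subseteq> {0,1,2}" by (auto simp: I_def eval_nat_numeral less_Suc_eq)
  have ind2: "indep_vars (\<lambda>_. borel) (\<lambda>j x. a j * Z j x) {0,1,2}"
    by (rule indep_vars_compose2[OF ind]) simp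
  have indI: "indep_vars (\<lambda>_. borel) (\<lambda>j x. a j * Z j x) I"
    by (rule indep_vars_subset[OF ind2 sub])
  have nj: "distributed M lborel (\<lambda>x. a j * Z j x) (normal_density 0 \<bar>a j\<bar>)" if "j \<in> I" for j
  proof -
    have "distributed M lborel (\<lambda>x. 0 + a j * Z j x) (normal_density (0 + a j * 0) (\<bar>a j\<bar> * 1))"
      by (rule normal_density_affine) (use D sub that in \<open>auto simp: I_def\<close>)
    then show ?thesis by simp
  qed
  have "distributed M lborel (\<lambda>x. \<Sum>j\<in>I. a j * Z j x)
          (normal_density (\<Sum>j\<in>I. 0) (sqrt (\<Sum>j\<in>I. \<bar>a j\<bar>\<^sup>2)))"
    by (rule sum_indep_normal[OF fin ne indI]) (use nj in \<open>auto simp: I_def\<close>)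
  moreover have "(\<lambda>x. \<Sum>j\<in>I. a j * Z j x) = (\<lambda>x. \<Sum>j<3. a j * Z j x)"
    by (rule ext, rule sum.mono_neutral_left) (auto simp: I_def)
  moreover have "(\<Sum>j\<in>I. \<bar>a j\<bar>\<^sup>2) = (\<Sum>j<3. (a j)\<^sup>2)"
    by (simp, rule sum.mono_neutral_left) (auto simp: I_def)
  ultimately show ?thesis by simp
qed

definition Zc :: "nat \<Rightarrow> real \<times> real \<times> real \<Rightarrow> real" where
  "Zc j w = (if j = 0 then fst w else if j = 1 then fst (snd w) else snd (snd w))"

lemma Zc_meas[measurable]: "Zc j \<in> borel_measurable (borel \<Otimes>\<^sub>M (borel \<Otimes>\<^sub>M borel))"
  unfolding Zc_def by measurable

lemma exists_space:
  "\<exists>(M :: (real \<times> real \<times> real) measure). prob_space M \<and>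
     prob_space.indep_vars M (\<lambda>_. borel) Zc {0,1,2::nat} \<and>
     (\<forall>j\<in>{0,1,2}. distributed M lborel (Zc j) (\<lambda>x. ennreal (std_normal_density x)))"
proof -
  define N where "N = density lborel (\<lambda>x. ennreal (std_normal_density x))"
  have PN: "prob_space N" unfolding N_def by (rule prob_space_normal_density) simp
  have sN: "sets N = sets borel" by (simp add: N_def)
  define I where "I = {0,1,2::nat}"
  define P where "P = PiM I (\<lambda>_. N)"
  have PP: "prob_space P" unfolding P_def by (rule prob_space_PiM) (use PN in auto)
  have sP: "sets P = sets (PiM I (\<lambda>_. borel :: real measure))"
    unfolding P_def by (rule sets_PiM_cong) (auto simp: sN)
  define T where "T = (borel \<Otimes>\<^sub>M (borel \<Otimes>\<^sub>M borel) :: (real \<times> real \<times> real) measure)"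
  define g where "g = (\<lambda>f::nat\<Rightarrow>real. (f 0, f 1, f 2))"
  have gm: "g \<in> measurable P T"
    unfolding measurable_cong_sets[OF sP refl] g_def T_def I_def by measurable
  define M where "M = distr P T g"
  have PM: "prob_space M" unfolding M_def by (rule prob_space.prob_space_distr[OF PP gm])
  interpret prob_space M by fact
  have sM: "sets M = sets T" by (simp add: M_def)
  have Zm: "Zc j \<in> measurable M N" for j
    unfolding measurable_cong_sets[OF sM sN] T_def by measurable
  have Zg: "Zc j \<circ> g = (\<lambda>f. f j)" if "j \<in> I" for j
    using that by (auto simp: I_def Zc_def g_def)
  have comp: "distr M N (Zc j) = N" if "j \<in> I" for j
  proof -
    have "distr M N (Zc j) = distr P N (Zc j \<circ> g)"
      unfolding M_def by (rule distr_distr[OF _ gm]) (use Zm in \<open>simp add: M_def\<close>)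
    also have "\<dots> = distr P N (\<lambda>f. f j)" by (simp add: Zg[OF that])
    also have "\<dots> = N" unfolding P_def by (rule distr_PiM_component) (use PN that in auto)
    finally show ?thesis .
  qed
  have hm: "(\<lambda>x. \<lambda>i\<in>I. Zc i x) \<in> measurable T (PiM I (\<lambda>_. N))"
    using Zm[unfolded measurable_cong_sets[OF sM refl]] by (intro measurable_restrict) auto
  have "distr M (PiM I (\<lambda>_. N)) (\<lambda>x. \<lambda>i\<in>I. Zc i x) = distr P (PiM I (\<lambda>_. N)) ((\<lambda>x. \<lambda>i\<in>I. Zc i x) \<circ> g)"
    unfolding M_def by (rule distr_distr[OF hm gm])
  also have "\<dots> = distr P P (\<lambda>x. x)"
  proof (rule distr_cong)
    show "sets (PiM I (\<lambda>_. N)) = sets P" by (simp add: P_def)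
    fix f assume "f \<in> space P"
    then have "f \<in> extensional I" by (auto simp: P_def space_PiM PiE_def)
    then show "((\<lambda>x. \<lambda>i\<in>I. Zc i x) \<circ> g) f = f"
      by (auto simp: fun_eq_iff restrict_def extensional_def I_def Zc_def g_def)
  qed simp
  also have "\<dots> = P" by simp
  also have "P = PiM I (\<lambda>i. distr M N (Zc i))"
    unfolding P_def by (rule PiM_cong) (auto simp: comp)
  finally have eq: "distr M (PiM I (\<lambda>_. N)) (\<lambda>x. \<lambda>i\<in>I. Zc i x) = PiM I (\<lambda>i. distr M N (Zc i))" .
  have indN: "indep_vars (\<lambda>_. N) Zc I"
    by (subst indep_vars_iff_distr_eq_PiM) (use eq Zm in \<open>auto simp: I_def\<close>)
  have ind: "indep_vars (\<lambda>_. borel) Zc I"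
    using indN unfolding indep_vars_def measurable_cong_sets[OF refl sN] sN .
  have dist: "distributed M lborel (Zc j) (\<lambda>x. ennreal (std_normal_density x))" if "j \<in> I" for j
    unfolding distributed_def
  proof (intro conjI)
    show "Zc j \<in> measurable M lborel" using Zm[of j] by (simp add: measurable_cong_sets[OF refl sN])
    show "(\<lambda>x. ennreal (std_normal_density x)) \<in> borel_measurable lborel" by simp
    have "distr M lborel (Zc j) = distr M N (Zc j)" by (rule distr_cong) (auto simp: sN)
    then show "distr M lborel (Zc j) = density lborel (\<lambda>x. ennreal (std_normal_density x))"
      using comp[OF that] by (simp add: N_def)
  qed
  show ?thesis using PM ind dist by (auto simp: I_def)
qed




lemma gram3:
  fixes a b c :: "nat \<Rightarrow> real"
  shows "(\<Sum>j<3. a j ^ 2) * (\<Sum>j<3. b j ^ 2) * (\<Sum>j<3. c j ^ 2)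
    + 2 * (\<Sum>j<3. a j * b j) * (\<Sum>j<3. a j * c j) * (\<Sum>j<3. b j * c j)
    - (\<Sum>j<3. a j ^ 2) * (\<Sum>j<3. b j * c j)^2 - (\<Sum>j<3. b j ^ 2) * (\<Sum>j<3. a j * c j)^2
    - (\<Sum>j<3. c j ^ 2) * (\<Sum>j<3. a j * b j)^2 \<ge> 0"
proof -
  have "(\<Sum>j<3. a j ^ 2) * (\<Sum>j<3. b j ^ 2) * (\<Sum>j<3. c j ^ 2)
    + 2 * (\<Sum>j<3. a j * b j) * (\<Sum>j<3. a j * c j) * (\<Sum>j<3. b j * c j)
    - (\<Sum>j<3. a j ^ 2) * (\<Sum>j<3. b j * c j)^2 - (\<Sum>j<3. b j ^ 2) * (\<Sum>j<3. a j * c j)^2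
    - (\<Sum>j<3. c j ^ 2) * (\<Sum>j<3. a j * b j)^2 =
    (a 0 * (b 1 * c 2 - b 2 * c 1) - a 1 * (b 0 * c 2 - b 2 * c 0) + a 2 * (b 0 * c 1 - b 1 * c 0))^2"
    by (simp add: eval_nat_numeral power2_eq_square algebra_simps)
  then show ?thesis by simp
qed

lemma fwd_alg:
  fixes s1 s2 s3 r12 r0 s t r p12 p13 p23 q :: real
  assumes pos: "s1 > 0" "s2 > 0" "s3 > 0"
  and G: "s1^2 * s2^2 * s3^2 + 2 * p12 * p13 * p23 - s1^2 * p23^2 - s2^2 * p13^2 - s3^2 * p12^2 \<ge> 0"
  and p12: "p12 = r12 * s1 * s2"
  and S: "s^2 = s1^2 + s2^2 + 2 * r12 * s1 * s2" and spos: "s > 0"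
  and p23: "p13 + p23 = r0 * s * s3"
  and p13: "p13 = r * s1 * s3"
  and t: "t = s1 + r12 * s2"
  shows "(s * r - t * r0)^2 \<le> s2^2 * (1 - r12^2) * (1 - r0^2)"
proof -
  have e: "s1^2 * s2^2 * s3^2 + 2 * p12 * p13 * p23 - s1^2 * p23^2 - s2^2 * p13^2 - s3^2 * p12^2
     = s1^2 * s3^2 * (s2^2 * (1 - r12^2) * (1 - r0^2) - (s * r - t * r0)^2)"
    using p12 S p23 p13 t by algebra
  have "s1^2 * s3^2 > 0" using pos by simp
  then show ?thesis using G e
    by (smt (verit, ccfv_threshold) zero_le_mult_iff)
qed




lemma sum3: "(\<Sum>j<(3::nat). f j) = f 0 + f 1 + (f 2 :: real)"
  by (simp add: eval_nat_numeral)

lemma interval_iff: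
  fixes s t r r0 D :: real
  assumes "s > 0" "D \<ge> 0"
  shows "(s * r - t * r0)^2 \<le> D \<longleftrightarrow> r \<in> {t * r0 / s - sqrt D / s .. t * r0 / s + sqrt D / s}"
proof -
  have "(s * r - t * r0)^2 \<le> D \<longleftrightarrow> \<bar>s * r - t * r0\<bar> \<le> sqrt D"
    by (metis abs_ge_zero real_le_rsqrt real_sqrt_abs real_sqrt_le_iff)
  also have "\<dots> \<longleftrightarrow> t * r0 - sqrt D \<le> s * r \<and> s * r \<le> t * r0 + sqrt D" by linarith
  also have "\<dots> \<longleftrightarrow> r \<in> {t * r0 / s - sqrt D / s .. t * r0 / s + sqrt D / s}"
    using assms(1) by (auto simp: field_simps)
  finally show ?thesis .
qed

lemma rev_alg:
  fixes s1 s2 r12 r0 s t r :: real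
  assumes pos: "s1 > 0" "s2 > 0" and r12: "r12^2 \<le> 1" and r0: "r0^2 \<le> 1"
  and S: "s^2 = s1^2 + s2^2 + 2 * r12 * s1 * s2" and spos: "s > 0"
  and t: "t = s1 + r12 * s2"
  and R: "(s * r - t * r0)^2 \<le> s2^2 * (1 - r12^2) * (1 - r0^2)"
  shows "\<exists>y z. t * r + s2 * sqrt (1 - r12^2) * y = r0 * s \<and> r^2 + y^2 + z^2 = 1"
proof (cases "r12^2 = 1")
  case True
  then have "(s * r - t * r0)^2 \<le> 0" using R by simp
  then have sr: "s * r = t * r0" by simp
  have st: "s^2 = t^2" unfolding S t using True by (simp add: power2_eq_square algebra_simps)
  have "t * r = r0 * s"
  proof -
    have "s * (t * r) = s * (r0 * s)" using sr st by (simp add: power2_eq_square algebra_simps)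
    then show ?thesis using spos by simp
  qed
  moreover have "r^2 = r0^2"
  proof -
    have "s^2 * r^2 = s^2 * r0^2" using sr st by (metis power_mult_distrib mult.commute)
    then show ?thesis using spos by simp
  qed
  ultimately show ?thesis using True r0
    by (intro exI[of _ 0] exI[of _ "sqrt (1 - r^2)"]) simp
next
  case False
  define c where "c = sqrt (1 - r12^2)"
  have c2: "c^2 = 1 - r12^2" using r12 by (simp add: c_def)
  have cpos: "c > 0" using False r12 by (simp add: c_def)
  define y where "y = (r0 * s - t * r) / (s2 * c)"
  have ty: "t * r + s2 * c * y = r0 * s" using cpos pos by (simp add: y_def field_simps)
  have key: "s2^2 * c^2 * (r^2 + y^2) \<le> s2^2 * c^2"
  proof -
    have e1: "s2^2 * c^2 * y^2 = (r0 * s - t * r)^2" using cpos pos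
      by (simp add: y_def power_divide power_mult_distrib)
    have h: "s2^2 * c^2 = s^2 - t^2" unfolding c2 S t by (simp add: power2_eq_square algebra_simps)
    have "s2^2 * c^2 * (r^2 + y^2) = s2^2 * c^2 * r^2 + (r0 * s - t * r)^2"
      using e1 by (simp add: algebra_simps)
    also have "\<dots> = (s^2 - t^2) * r^2 + (r0 * s - t * r)^2" by (simp only: h)
    also have "\<dots> = (s * r - t * r0)^2 + r0^2 * (s^2 - t^2)"
      by (simp add: power2_eq_square algebra_simps)
    also have "\<dots> = (s * r - t * r0)^2 + r0^2 * (s2^2 * c^2)" by (simp only: h)
    also have "\<dots> \<le> s2^2 * c^2"
    proof -
      have "(s * r - t * r0)^2 \<le> s2^2 * c^2 * (1 - r0^2)" using R c2 by (simp add: mult.assoc)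
      moreover have "s2^2 * c^2 * (1 - r0^2) + r0^2 * (s2^2 * c^2) = s2^2 * c^2"
        by (simp add: algebra_simps)
      ultimately show ?thesis by linarith
    qed
    finally show ?thesis .
  qed
  have "r^2 + y^2 \<le> 1"
  proof -
    have "s2^2 * c^2 > 0" using cpos pos by simp
    then show ?thesis using key by (metis mult.right_neutral mult_le_cancel_left_pos)
  qed
  then show ?thesis using ty unfolding c_def
    by (intro exI[of _ y] exI[of _ "sqrt (1 - r^2 - y^2)"]) simp
qed




lemma sqrt_sq_mult: "a > 0 \<Longrightarrow> b > 0 \<Longrightarrow> sqrt (a^2 * b^2) = a * (b::real)"
  by (simp add: real_sqrt_mult)

lemma fwd:
  fixes M :: "'a measure" and \<sigma>1 \<sigma>2 \<sigma>3 \<rho>12 \<rho>0 :: real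
  assumes pos: "\<sigma>1 > 0" "\<sigma>2 > 0" "\<sigma>3 > 0"
    and Spos: "\<sigma>1\<^sup>2 + \<sigma>2\<^sup>2 + 2 * \<rho>12 * \<sigma>1 * \<sigma>2 > 0"
    and mvn: "centered_mvn3 M X1 X2 X3"
    and d1: "distributed M lborel X1 (\<lambda>x. ennreal (normal_density 0 \<sigma>1 x))"
    and d2: "distributed M lborel X2 (\<lambda>x. ennreal (normal_density 0 \<sigma>2 x))"
    and d3: "distributed M lborel X3 (\<lambda>x. ennreal (normal_density 0 \<sigma>3 x))"
    and c12: "correlation M X1 X2 = \<rho>12"
    and c0: "correlation M (\<lambda>x. X1 x + X2 x) X3 = \<rho>0"
  shows "(sqrt (\<sigma>1\<^sup>2 + \<sigma>2\<^sup>2 + 2 * \<rho>12 * \<sigma>1 * \<sigma>2) * correlation M X1 X3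
          - (\<sigma>1 + \<rho>12 * \<sigma>2) * \<rho>0)^2 \<le> \<sigma>2^2 * (1 - \<rho>12^2) * (1 - \<rho>0^2)"
proof -
  define S where "S = \<sigma>1\<^sup>2 + \<sigma>2\<^sup>2 + 2 * \<rho>12 * \<sigma>1 * \<sigma>2"
  define s where "s = sqrt S"
  have spos: "s > 0" using Spos by (simp add: s_def S_def)
  have s2: "s^2 = S" using Spos by (simp add: s_def S_def)
  from mvn obtain Z :: "nat \<Rightarrow> 'a \<Rightarrow> real" and A :: "nat \<Rightarrow> nat \<Rightarrow> real" where P: "prob_space M"
    and ind: "prob_space.indep_vars M (\<lambda>_. borel) Z {0, 1, 2}"
    and D: "\<forall>j \<in> {0, 1, 2}. distributed M lborel (Z j) (\<lambda>x. ennreal (std_normal_density x))"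
    and X: "\<forall>x \<in> space M.
           X1 x = A 1 0 * Z 0 x + A 1 1 * Z 1 x + A 1 2 * Z 2 x \<and>
           X2 x = A 2 0 * Z 0 x + A 2 1 * Z 1 x + A 2 2 * Z 2 x \<and>
           X3 x = A 3 0 * Z 0 x + A 3 1 * Z 1 x + A 3 2 * Z 2 x"
    unfolding centered_mvn3_def by blast
  interpret prob_space M by fact
  have h1: "\<forall>x\<in>space M. X1 x = (\<Sum>j<3. A 1 j * Z j x)" using X by (simp add: sum3)
  have h2: "\<forall>x\<in>space M. X2 x = (\<Sum>j<3. A 2 j * Z j x)" using X by (simp add: sum3)
  have h3: "\<forall>x\<in>space M. X3 x = (\<Sum>j<3. A 3 j * Z j x)" using X by (simp add: sum3)
  have h12: "\<forall>x\<in>space M. X1 x + X2 x = (\<Sum>j<3. (A 1 j + A 2 j) * Z j x)"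
    using X by (simp add: sum3 algebra_simps)
  note cv = lincov(2)[OF P ind D]
  have v: "covariance M X X = \<sigma>^2" if "\<sigma> > 0"
    "distributed M lborel X (\<lambda>x. ennreal (normal_density 0 \<sigma> x))" for X \<sigma>
    using normal_distributed_variance[OF that] by (simp add: covariance_def power2_eq_square)
  have n1: "(\<Sum>j<3. A 1 j ^ 2) = \<sigma>1^2" using cv[OF h1 h1] v[OF pos(1) d1] by (simp add: power2_eq_square)
  have n2: "(\<Sum>j<3. A 2 j ^ 2) = \<sigma>2^2" using cv[OF h2 h2] v[OF pos(2) d2] by (simp add: power2_eq_square)
  have n3: "(\<Sum>j<3. A 3 j ^ 2) = \<sigma>3^2" using cv[OF h3 h3] v[OF pos(3) d3] by (simp add: power2_eq_square)
  define p12 where "p12 = (\<Sum>j<3. A 1 j * A 2 j)"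
  define p13 where "p13 = (\<Sum>j<3. A 1 j * A 3 j)"
  define p23 where "p23 = (\<Sum>j<3. A 2 j * A 3 j)"
  have G: "\<sigma>1^2 * \<sigma>2^2 * \<sigma>3^2 + 2 * p12 * p13 * p23 - \<sigma>1^2 * p23^2 - \<sigma>2^2 * p13^2 - \<sigma>3^2 * p12^2 \<ge> 0"
    using gram3[of "A 1" "A 2" "A 3"] unfolding n1 n2 n3 p12_def p13_def p23_def .
  have e12: "correlation M X1 X2 = p12 / (\<sigma>1 * \<sigma>2)"
    unfolding correlation_def cv[OF h1 h2] cv[OF h1 h1] cv[OF h2 h2]
    using n1 n2 pos sqrt_sq_mult[of \<sigma>1 \<sigma>2] by (simp add: power2_eq_square p12_def)
  have P12: "p12 = \<rho>12 * \<sigma>1 * \<sigma>2" using c12 e12 pos by (simp add: field_simps)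
  have v12: "covariance M (\<lambda>x. X1 x + X2 x) (\<lambda>x. X1 x + X2 x) = S"
  proof -
    have "covariance M (\<lambda>x. X1 x + X2 x) (\<lambda>x. X1 x + X2 x)
       = (\<Sum>j<3. A 1 j ^ 2) + (\<Sum>j<3. A 2 j ^ 2) + 2 * p12"
      unfolding cv[OF h12 h12] p12_def by (simp add: sum3 power2_eq_square algebra_simps)
    then show ?thesis using n1 n2 P12 by (simp add: S_def)
  qed
  have e0: "correlation M (\<lambda>x. X1 x + X2 x) X3 = (p13 + p23) / (s * \<sigma>3)"
  proof -
    have "covariance M (\<lambda>x. X1 x + X2 x) X3 = p13 + p23"
      unfolding cv[OF h12 h3] p13_def p23_def by (simp add: sum3 algebra_simps)
    moreover have "sqrt (S * \<sigma>3^2) = s * \<sigma>3" using pos by (simp add: s_def real_sqrt_mult)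
    ultimately show ?thesis unfolding correlation_def v12 cv[OF h3 h3]
      using n3 by (simp add: power2_eq_square)
  qed
  have P23: "p13 + p23 = \<rho>0 * s * \<sigma>3" using c0 e0 pos spos by (simp add: field_simps)
  define r where "r = correlation M X1 X3"
  have e13: "r = p13 / (\<sigma>1 * \<sigma>3)"
    unfolding r_def correlation_def cv[OF h1 h3] cv[OF h1 h1] cv[OF h3 h3]
    using n1 n3 pos sqrt_sq_mult[of \<sigma>1 \<sigma>3] by (simp add: power2_eq_square p13_def)
  have P13: "p13 = r * \<sigma>1 * \<sigma>3" using e13 pos by (simp add: field_simps)
  have "(s * r - (\<sigma>1 + \<rho>12 * \<sigma>2) * \<rho>0)^2 \<le> \<sigma>2^2 * (1 - \<rho>12^2) * (1 - \<rho>0^2)"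
    by (rule fwd_alg[OF pos G P12 _ spos P23 P13 refl]) (simp add: s2 S_def)
  then show ?thesis unfolding r_def s_def S_def .
qed

lemma rev:
  fixes \<sigma>1 \<sigma>2 \<sigma>3 \<rho>12 \<rho>0 r :: real
  assumes pos: "\<sigma>1 > 0" "\<sigma>2 > 0" "\<sigma>3 > 0"
    and r12: "\<rho>12^2 \<le> 1" and r0: "\<rho>0^2 \<le> 1"
    and Spos: "\<sigma>1\<^sup>2 + \<sigma>2\<^sup>2 + 2 * \<rho>12 * \<sigma>1 * \<sigma>2 > 0"
    and R: "(sqrt (\<sigma>1\<^sup>2 + \<sigma>2\<^sup>2 + 2 * \<rho>12 * \<sigma>1 * \<sigma>2) * r
          - (\<sigma>1 + \<rho>12 * \<sigma>2) * \<rho>0)^2 \<le> \<sigma>2^2 * (1 - \<rho>12^2) * (1 - \<rho>0^2)"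
  shows "\<exists>(M :: (real \<times> real \<times> real) measure) X1 X2 X3. r = correlation M X1 X3 \<and>
            centered_mvn3 M X1 X2 X3 \<and>
            distributed M lborel X1 (\<lambda>x. ennreal (normal_density 0 \<sigma>1 x)) \<and>
            distributed M lborel X2 (\<lambda>x. ennreal (normal_density 0 \<sigma>2 x)) \<and>
            distributed M lborel X3 (\<lambda>x. ennreal (normal_density 0 \<sigma>3 x)) \<and>
            correlation M X1 X2 = \<rho>12 \<and>
            correlation M (\<lambda>x. X1 x + X2 x) X3 = \<rho>0"
proof -
  define S where "S = \<sigma>1\<^sup>2 + \<sigma>2\<^sup>2 + 2 * \<rho>12 * \<sigma>1 * \<sigma>2"
  define s where "s = sqrt S"
  define t where "t = \<sigma>1 + \<rho>12 * \<sigma>2"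
  define c where "c = sqrt (1 - \<rho>12^2)"
  have c2: "c^2 = 1 - \<rho>12^2" using r12 by (simp add: c_def)
  have spos: "s > 0" using Spos by (simp add: s_def S_def)
  have s2: "s^2 = S" using Spos by (simp add: s_def S_def)
  obtain y z where ty: "t * r + \<sigma>2 * c * y = \<rho>0 * s" and ryz: "r^2 + y^2 + z^2 = 1"
    using rev_alg[OF pos(1,2) r12 r0 _ spos refl, of r] R s2
    unfolding c_def t_def S_def s_def by auto
  obtain M :: "(real \<times> real \<times> real) measure" where P: "prob_space M"
    and ind: "prob_space.indep_vars M (\<lambda>_. borel) Zc {0,1,2::nat}"
    and D: "\<forall>j\<in>{0,1,2}. distributed M lborel (Zc j) (\<lambda>x. ennreal (std_normal_density x))"
    using exists_space by blast
  define A :: "nat \<Rightarrow> nat \<Rightarrow> real" where "A i j =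
    (if i = 1 then (if j = 0 then \<sigma>1 else 0)
     else if i = 2 then (if j = 0 then \<rho>12 * \<sigma>2 else if j = 1 then \<sigma>2 * c else 0)
     else (if j = 0 then \<sigma>3 * r else if j = 1 then \<sigma>3 * y else \<sigma>3 * z))" for i j
  define X1 where "X1 w = (\<Sum>j<3. A 1 j * Zc j w)" for w
  define X2 where "X2 w = (\<Sum>j<3. A 2 j * Zc j w)" for w
  define X3 where "X3 w = (\<Sum>j<3. A 3 j * Zc j w)" for w
  have h1: "\<forall>x\<in>space M. X1 x = (\<Sum>j<3. A 1 j * Zc j x)" by (simp add: X1_def)
  have h2: "\<forall>x\<in>space M. X2 x = (\<Sum>j<3. A 2 j * Zc j x)" by (simp add: X2_def)
  have h3: "\<forall>x\<in>space M. X3 x = (\<Sum>j<3. A 3 j * Zc j x)" by (simp add: X3_def)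
  have h12: "\<forall>x\<in>space M. X1 x + X2 x = (\<Sum>j<3. (A 1 j + A 2 j) * Zc j x)"
    by (simp add: X1_def X2_def sum3 algebra_simps)
  have n1: "(\<Sum>j<3. A 1 j ^ 2) = \<sigma>1^2" by (simp add: sum3 A_def)
  have n2: "(\<Sum>j<3. A 2 j ^ 2) = \<sigma>2^2"
    by (simp add: sum3 A_def power_mult_distrib c2 algebra_simps)
  have n3: "(\<Sum>j<3. A 3 j ^ 2) = \<sigma>3^2"
  proof -
    have "(\<Sum>j<3. A 3 j ^ 2) = \<sigma>3^2 * (r^2 + y^2 + z^2)"
      by (simp add: sum3 A_def power_mult_distrib algebra_simps)
    then show ?thesis using ryz by simp
  qed
  have nd: "distributed M lborel X (\<lambda>x. ennreal (normal_density 0 \<sigma> x))"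
    if "X = (\<lambda>x. \<Sum>j<3. A i j * Zc j x)" "(\<Sum>j<3. A i j ^ 2) = \<sigma>^2" "\<sigma> > 0" for X i \<sigma>
  proof -
    have "distributed M lborel (\<lambda>x. \<Sum>j<3. A i j * Zc j x)
           (\<lambda>x. ennreal (normal_density 0 (sqrt (\<Sum>j<3. (A i j)\<^sup>2)) x))"
      by (rule linnormal[OF P ind D]) (use that in simp)
    then have "distributed M lborel (\<lambda>x. \<Sum>j<3. A i j * Zc j x)
           (\<lambda>x. ennreal (normal_density 0 \<sigma> x))" using that by simp
    then show ?thesis using that(1) by simp
  qed
  note cv = lincov(2)[OF P ind D]
  have cor: "correlation M X1 X3 = r"
  proof -
    have "covariance M X1 X3 = \<sigma>1 * \<sigma>3 * r" unfolding cv[OF h1 h3] by (simp add: sum3 A_def)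
    moreover have "covariance M X1 X1 = \<sigma>1^2" using cv[OF h1 h1] n1 by (simp add: power2_eq_square)
    moreover have "covariance M X3 X3 = \<sigma>3^2" using cv[OF h3 h3] n3 by (simp add: power2_eq_square)
    ultimately show ?thesis using pos sqrt_sq_mult[of \<sigma>1 \<sigma>3] by (simp add: correlation_def)
  qed
  have cor12: "correlation M X1 X2 = \<rho>12"
  proof -
    have "covariance M X1 X2 = \<sigma>1 * \<sigma>2 * \<rho>12" unfolding cv[OF h1 h2] by (simp add: sum3 A_def)
    moreover have "covariance M X1 X1 = \<sigma>1^2" using cv[OF h1 h1] n1 by (simp add: power2_eq_square)
    moreover have "covariance M X2 X2 = \<sigma>2^2" using cv[OF h2 h2] n2 by (simp add: power2_eq_square)
    ultimately show ?thesis using pos sqrt_sq_mult[of \<sigma>1 \<sigma>2] by (simp add: correlation_def)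
  qed
  have cor0: "correlation M (\<lambda>x. X1 x + X2 x) X3 = \<rho>0"
  proof -
    have "covariance M (\<lambda>x. X1 x + X2 x) X3 = \<sigma>3 * (t * r + \<sigma>2 * c * y)"
      unfolding cv[OF h12 h3] by (simp add: sum3 A_def t_def algebra_simps)
    also have "\<dots> = \<sigma>3 * \<rho>0 * s" using ty by simp
    finally have a: "covariance M (\<lambda>x. X1 x + X2 x) X3 = \<sigma>3 * \<rho>0 * s" .
    have "covariance M (\<lambda>x. X1 x + X2 x) (\<lambda>x. X1 x + X2 x) = (\<sigma>1 + \<rho>12 * \<sigma>2)^2 + \<sigma>2^2 * c^2"
      unfolding cv[OF h12 h12] by (simp add: sum3 A_def power2_eq_square algebra_simps)
    also have "\<dots> = S" unfolding c2 S_def by (simp add: power2_eq_square algebra_simps)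
    finally have b: "covariance M (\<lambda>x. X1 x + X2 x) (\<lambda>x. X1 x + X2 x) = S" .
    have cc: "covariance M X3 X3 = \<sigma>3^2" using cv[OF h3 h3] n3 by (simp add: power2_eq_square)
    have "sqrt (S * \<sigma>3^2) = s * \<sigma>3" using pos by (simp add: s_def real_sqrt_mult)
    then show ?thesis using a b cc pos spos by (simp add: correlation_def)
  qed
  have mvn: "centered_mvn3 M X1 X2 X3"
    unfolding centered_mvn3_def
    by (intro conjI P exI[of _ Zc] exI[of _ A] ind D) (simp add: X1_def X2_def X3_def sum3)
  show ?thesis
    by (intro exI[of _ M] exI[of _ X1] exI[of _ X2] exI[of _ X3] conjI cor[symmetric] mvn cor12 cor0
        nd[OF _ n1 pos(1)] nd[OF _ n2 pos(2)] nd[OF _ n3 pos(3)])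
       (simp_all add: fun_eq_iff X1_def X2_def X3_def)
qed




theorem mainTheorem6:
  fixes \<sigma>1 \<sigma>2 \<sigma>3 \<rho>12 \<rho>0 :: real
  assumes "\<sigma>1 > 0" and "\<sigma>2 > 0" and "\<sigma>3 > 0"
    and "\<rho>12 \<in> {-1..1}" and "\<rho>0 \<in> {-1..1}"
    and "\<sigma>1\<^sup>2 + \<sigma>2\<^sup>2 + 2 * \<rho>12 * \<sigma>1 * \<sigma>2 > 0"
  shows "{correlation M X1 X3 | (M :: (real \<times> real \<times> real) measure) X1 X2 X3.
            centered_mvn3 M X1 X2 X3 \<and>
            distributed M lborel X1 (\<lambda>x. ennreal (normal_density 0 \<sigma>1 x)) \<and>
            distributed M lborel X2 (\<lambda>x. ennreal (normal_density 0 \<sigma>2 x)) \<and>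
            distributed M lborel X3 (\<lambda>x. ennreal (normal_density 0 \<sigma>3 x)) \<and>
            correlation M X1 X2 = \<rho>12 \<and>
            correlation M (\<lambda>x. X1 x + X2 x) X3 = \<rho>0}
         = {(\<rho>0 * \<rho>12 * \<sigma>2 + \<rho>0 * \<sigma>1) / sqrt (\<sigma>1\<^sup>2 + \<sigma>2\<^sup>2 + 2 * \<rho>12 * \<sigma>1 * \<sigma>2)
              - sqrt (\<sigma>2\<^sup>2 * (1 - \<rho>12\<^sup>2) * (1 - \<rho>0\<^sup>2)) / sqrt (\<sigma>1\<^sup>2 + \<sigma>2\<^sup>2 + 2 * \<rho>12 * \<sigma>1 * \<sigma>2)
            ..
            (\<rho>0 * \<rho>12 * \<sigma>2 + \<rho>0 * \<sigma>1) / sqrt (\<sigma>1\<^sup>2 + \<sigma>2\<^sup>2 + 2 * \<rho>12 * \<sigma>1 * \<sigma>2)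
              + sqrt (\<sigma>2\<^sup>2 * (1 - \<rho>12\<^sup>2) * (1 - \<rho>0\<^sup>2)) / sqrt (\<sigma>1\<^sup>2 + \<sigma>2\<^sup>2 + 2 * \<rho>12 * \<sigma>1 * \<sigma>2)}"
proof -
  define S where "S = \<sigma>1\<^sup>2 + \<sigma>2\<^sup>2 + 2 * \<rho>12 * \<sigma>1 * \<sigma>2"
  define s where "s = sqrt S"
  define t where "t = \<sigma>1 + \<rho>12 * \<sigma>2"
  define D where "D = \<sigma>2\<^sup>2 * (1 - \<rho>12\<^sup>2) * (1 - \<rho>0\<^sup>2)"
  have r12: "\<rho>12^2 \<le> 1" using assms(4) by (simp add: abs_square_le_1 abs_le_iff)
  have r0: "\<rho>0^2 \<le> 1" using assms(5) by (simp add: abs_square_le_1 abs_le_iff)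
  have spos: "s > 0" using assms(6) by (simp add: s_def S_def)
  have Dnn: "D \<ge> 0" using r12 r0 by (simp add: D_def)
  have num: "\<rho>0 * \<rho>12 * \<sigma>2 + \<rho>0 * \<sigma>1 = t * \<rho>0" by (simp add: t_def algebra_simps)
  have iff: "(s * r - t * \<rho>0)^2 \<le> D \<longleftrightarrow> r \<in> {t * \<rho>0 / s - sqrt D / s .. t * \<rho>0 / s + sqrt D / s}" for r
    by (rule interval_iff[OF spos Dnn])
  show ?thesis
    unfolding num
    unfolding S_def[symmetric] s_def[symmetric] D_def[symmetric]
  proof (rule set_eqI, rule iffI)
    fix r assume "r \<in> {correlation M X1 X3 | (M :: (real \<times> real \<times> real) measure) X1 X2 X3.
            centered_mvn3 M X1 X2 X3 \<and>
            distributed M lborel X1 (\<lambda>x. ennreal (normal_density 0 \<sigma>1 x)) \<and>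
            distributed M lborel X2 (\<lambda>x. ennreal (normal_density 0 \<sigma>2 x)) \<and>
            distributed M lborel X3 (\<lambda>x. ennreal (normal_density 0 \<sigma>3 x)) \<and>
            correlation M X1 X2 = \<rho>12 \<and>
            correlation M (\<lambda>x. X1 x + X2 x) X3 = \<rho>0}"
    then obtain M :: "(real \<times> real \<times> real) measure" and X1 X2 X3 where
      "r = correlation M X1 X3" "centered_mvn3 M X1 X2 X3"
      "distributed M lborel X1 (\<lambda>x. ennreal (normal_density 0 \<sigma>1 x))"
      "distributed M lborel X2 (\<lambda>x. ennreal (normal_density 0 \<sigma>2 x))"
      "distributed M lborel X3 (\<lambda>x. ennreal (normal_density 0 \<sigma>3 x))"
      "correlation M X1 X2 = \<rho>12" "correlation M (\<lambda>x. X1 x + X2 x) X3 = \<rho>0"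
      by blast
    then have "(s * r - t * \<rho>0)^2 \<le> D"
      using fwd[OF assms(1,2,3,6), of M X1 X2 X3] unfolding s_def S_def t_def D_def by simp
    then show "r \<in> {t * \<rho>0 / s - sqrt D / s .. t * \<rho>0 / s + sqrt D / s}" using iff by blast
  next
    fix r assume "r \<in> {t * \<rho>0 / s - sqrt D / s .. t * \<rho>0 / s + sqrt D / s}"
    then have "(s * r - t * \<rho>0)^2 \<le> D" using iff by blast
    then have "\<exists>(M :: (real \<times> real \<times> real) measure) X1 X2 X3. r = correlation M X1 X3 \<and>
            centered_mvn3 M X1 X2 X3 \<and>
            distributed M lborel X1 (\<lambda>x. ennreal (normal_density 0 \<sigma>1 x)) \<and>
            distributed M lborel X2 (\<lambda>x. ennreal (normal_density 0 \<sigma>2 x)) \<and>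
            distributed M lborel X3 (\<lambda>x. ennreal (normal_density 0 \<sigma>3 x)) \<and>
            correlation M X1 X2 = \<rho>12 \<and>
            correlation M (\<lambda>x. X1 x + X2 x) X3 = \<rho>0"
      by (intro rev[OF assms(1,2,3) r12 r0 assms(6)]) (simp add: s_def S_def t_def D_def)
    then show "r \<in> {correlation M X1 X3 | (M :: (real \<times> real \<times> real) measure) X1 X2 X3.
            centered_mvn3 M X1 X2 X3 \<and>
            distributed M lborel X1 (\<lambda>x. ennreal (normal_density 0 \<sigma>1 x)) \<and>
            distributed M lborel X2 (\<lambda>x. ennreal (normal_density 0 \<sigma>2 x)) \<and>
            distributed M lborel X3 (\<lambda>x. ennreal (normal_density 0 \<sigma>3 x)) \<and>
            correlation M X1 X2 = \<rho>12 \<and>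
            correlation M (\<lambda>x. X1 x + X2 x) X3 = \<rho>0}" by blast
  qed
qed


end
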